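(* Let $S$ be a nonempty set of graphs on $\Pi$ and $i\in[1,n]$. If the $i$-th covering numbers sequence $(s_j)_{j\ge1}$ of $S$ satisfies $s_j=n$ for some $j$, then $i$-set agreement is solvable (in finitely many rounds) on the closed-above model generated by $S$.
   Context: Fix $\Pi=\{p_1,\dots,p_n\}$. A graph is a directed graph on $\Pi$ containing all self-loops; $Out_G(p)=\{q:(p,q)\in E(G)\}$, $In_G(p)=\{q:(q,p)\in E(G)\}$, $Out_G(P)=\bigcup_{p\in P}Out_G(p)$. Computation proceeds in failure-free, communication-closed rounds: in round $r$ a graph $G_r$ is chosen and each $p$ receives the round-$r$ messages of the processes in $In_{G_r}(p)$. $\uparrow G=\{H:E(H)\supseteq E(G)\}$; the closed-above model generated by $S$ allows exactly the executions whose round graphs each lie in $\bigcup_{G\in S}\uparrow G$. In $k$-set agreement each process starts with an input from a totally ordered set $V_{in}$ and must decide a value so that every decided value is some process's input and at most $k$ distinct values are decided; it is solvable on a model if some algorithm guarantees this, with all processes deciding after some fixed finite number of rounds, in every allowed execution and input assignment. $\mathrm{eqdom}(G)=\min\{i\in[1,n]:\forall P\subseteq\Pi,\ |P|=i\Rightarrow Out_G(P)=\Pi\}$ and $\mathrm{cov}_i(G)=\min_{P\subseteq\Pi,|P|=i}|Out_G(P)|$. The $i$-th covering numbers sequence of $S$ is defined by $s_1=\min_{G\in S}\mathrm{cov}_i(G)$ and, for $k\ge1$, $s_{k+1}=n$ if $s_k\ge\max_{G\in S}\mathrm{eqdom}(G)$, and $s_{k+1}=\min_{G\in S}\mathrm{cov}_{s_k}(G)$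 otherwise. *)

theory Defs
  imports Main "HOL-Library.Cardinality"
begin

(* Processes: the elements of a finite type 'p (so \<Pi> = UNIV, n = CARD('p)).
   A graph is an edge relation containing all self-loops. *)

type_synonym 'p graph = "('p \<times> 'p) set"

definition is_graph :: "'p graph \<Rightarrow> bool" where
  "is_graph G \<longleftrightarrow> (\<forall>p. (p, p) \<in> G)"

definition Out :: "'p graph \<Rightarrow> 'p \<Rightarrow> 'p set" where
  "Out G p = {q. (p, q) \<in> G}"

definition In :: "'p graph \<Rightarrow> 'p \<Rightarrow> 'p set" where
  "In G p = {q. (q, p) \<in> G}"

definition OutS :: "'p graph \<Rightarrow> 'p set \<Rightarrow> 'p set" where
  "OutS G P = (\<Union>p\<in>P. Out G p)"

definition eqdom :: "('p::finite) graph \<Rightarrow> nat" where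
  "eqdom G = Min {i. 1 \<le> i \<and> i \<le> CARD('p) \<and> (\<forall>P::'p set. card P = i \<longrightarrow> OutS G P = UNIV)}"

definition cov :: "nat \<Rightarrow> ('p::finite) graph \<Rightarrow> nat" where
  "cov i G = Min {card (OutS G P) | P::'p set. card P = i}"

(* i-th covering numbers sequence of S, indexed from 1 (index 0 is unused). *)
fun cov_seq :: "('p::finite) graph set \<Rightarrow> nat \<Rightarrow> nat \<Rightarrow> nat" where
  "cov_seq S i 0 = 0"
| "cov_seq S i (Suc 0) = Min ((\<lambda>G. cov i G) ` S)"
| "cov_seq S i (Suc (Suc k)) =
     (if cov_seq S i (Suc k) \<ge> Max (eqdom ` S) then CARD('p)
      else Min ((\<lambda>G. cov (cov_seq S i (Suc k)) G) ` S))"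

definition closed_above :: "'p graph set \<Rightarrow> (nat \<Rightarrow> 'p graph) set" where
  "closed_above S = {Gs. \<forall>r\<ge>1. is_graph (Gs r) \<and> (\<exists>G\<in>S. G \<subseteq> Gs r)}"

record ('p, 's, 'v) algo =
  init :: "'p \<Rightarrow> 'v \<Rightarrow> 's"
  send :: "nat \<Rightarrow> 'p \<Rightarrow> 's \<Rightarrow> 's"
  trans :: "nat \<Rightarrow> 'p \<Rightarrow> 's \<Rightarrow> ('p \<Rightarrow> 's option) \<Rightarrow> 's"
  decide :: "'p \<Rightarrow> 's \<Rightarrow> 'v"

fun run :: "('p, 's, 'v) algo \<Rightarrow> ('p \<Rightarrow> 'v) \<Rightarrow> (nat \<Rightarrow> 'p graph) \<Rightarrow> nat \<Rightarrow> 'p \<Rightarrow> 's" where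
  "run A x Gs 0 p = init A p (x p)"
| "run A x Gs (Suc r) p =
     trans A (Suc r) p (run A x Gs r p)
       (\<lambda>q. if (q, p) \<in> Gs (Suc r) then Some (send A (Suc r) q (run A x Gs r q)) else None)"

definition solves_ksa :: "('p, 's, 'v) algo \<Rightarrow> nat \<Rightarrow> nat \<Rightarrow> (nat \<Rightarrow> 'p graph) set \<Rightarrow> bool" where
  "solves_ksa A R k M \<longleftrightarrow>
     (\<forall>Gs\<in>M. \<forall>x::'p \<Rightarrow> 'v.
        (\<forall>p. decide A p (run A x Gs R p) \<in> range x) \<and>
        card (range (\<lambda>p. decide A p (run A x Gs R p))) \<le> k)"

(* Full-information views, used as a sufficiently rich universal state/message type. *)
datatype ('p, 'v) view = Init 'p 'v | Step "('p, 'v) view" "'p \<Rightarrow> ('p, 'v) view option"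

end

theory Submission
  imports Defs
begin

primrec vals :: "('p, 'v) view \<Rightarrow> 'v set" where
  "vals (Init p v) = {v}"
| "vals (Step s m) = vals s \<union> (\<Union>q. \<Union> (set_option (map_option vals (m q))))"

fun K :: "(nat \<Rightarrow> 'p graph) \<Rightarrow> nat \<Rightarrow> 'p \<Rightarrow> 'p set" where
  "K Gs 0 p = {p}"
| "K Gs (Suc r) p = K Gs r p \<union> (\<Union>q\<in>{q. (q,p) \<in> Gs (Suc r)}. K Gs r q)"

definition Alg :: "('p, ('p, 'v::linorder) view, 'v) algo" where
  "Alg = \<lparr>init = (\<lambda>p v. Init p v), send = (\<lambda>r p s. s), trans = (\<lambda>r p s m. Step s m),
          decide = (\<lambda>p s. Min (vals s))\<rparr>"

lemma vals_run: "vals (run Alg x Gs r p) = x ` K Gs r p"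
proof (induction r arbitrary: p)
  case 0
  then show ?case by (simp add: Alg_def)
next
  case (Suc r)
  have "vals (run Alg x Gs (Suc r) p) = vals (run Alg x Gs r p) \<union>
     (\<Union>q\<in>{q. (q,p) \<in> Gs (Suc r)}. vals (run Alg x Gs r q))"
    by (auto simp add: Alg_def split: if_splits)
  then show ?case by (simp add: Suc.IH image_Un image_UN)
qed

lemma self_K: "p \<in> K Gs r p"
  by (induction r) auto

definition D :: "(nat \<Rightarrow> 'p graph) \<Rightarrow> nat \<Rightarrow> 'p set \<Rightarrow> 'p set" where
  "D Gs r P = {p. K Gs r p \<inter> P \<noteq> {}}"

lemma D0: "D Gs 0 P = P" by (auto simp: D_def)

lemma D_step: "G \<subseteq> Gs (Suc r) \<Longrightarrow> OutS G (D Gs r P) \<subseteq> D Gs (Suc r) P"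
  by (auto simp: D_def OutS_def Out_def)

lemma cov_le:
  fixes G :: "('p::finite) graph"
  assumes "card Q = s"
  shows "cov s G \<le> card (OutS G Q)"
  unfolding cov_def
  by (rule Min_le) (use assms in auto)

lemma OutS_mono: "A \<subseteq> B \<Longrightarrow> OutS G A \<subseteq> OutS G B"
  by (auto simp: OutS_def)

lemma eqdom_prop:
  fixes G :: "('p::finite) graph"
  assumes g: "is_graph G" and c: "eqdom G \<le> card Q"
  shows "OutS G Q = UNIV"
proof -
  let ?E = "{i. 1 \<le> i \<and> i \<le> CARD('p) \<and> (\<forall>P::'p set. card P = i \<longrightarrow> OutS G P = UNIV)}"
  have "CARD('p) \<in> ?E"
  proof -
    have "1 \<le> CARD('p)" by (simp add: Suc_leI)
    moreover have "OutS G P = UNIV" if "card P = CARD('p)" for P :: "'p set"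
    proof -
      have "P = UNIV" using that by (simp add: card_eq_UNIV_imp_eq_UNIV)
      then show ?thesis using g by (auto simp: OutS_def Out_def is_graph_def)
    qed
    ultimately show ?thesis by auto
  qed
  then have "eqdom G \<in> ?E" unfolding eqdom_def
    by (intro Min_in) auto
  then have e: "\<forall>P::'p set. card P = eqdom G \<longrightarrow> OutS G P = UNIV" by blast
  obtain Q' where "Q' \<subseteq> Q" "card Q' = eqdom G"
    using obtain_subset_with_card_n[OF c] by metis
  then have "OutS G Q' = UNIV" using e by blast
  then show ?thesis using OutS_mono[OF \<open>Q' \<subseteq> Q\<close>, of G] by auto
qed

lemma cover:
  fixes S :: "('p::finite) graph set"
  assumes ne: "S \<noteq> {}" and gr: "\<forall>G\<in>S. is_graph G" and gs: "Gs \<in> closed_above S"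
    and cP: "card P = i"
  shows "cov_seq S i (Suc k) \<le> card (D Gs (Suc k) P)"
proof (induction k)
  case 0
  obtain G where G: "G \<in> S" "G \<subseteq> Gs (Suc 0)" using gs by (auto simp: closed_above_def)
  have "cov_seq S i (Suc 0) \<le> cov i G" using G by simp
  also have "\<dots> \<le> card (OutS G P)" by (rule cov_le[OF cP])
  also have "\<dots> \<le> card (D Gs (Suc 0) P)"
    using D_step[of G Gs _ P, OF G(2)] by (simp add: D0 card_mono)
  finally show ?case .
next
  case (Suc k)
  obtain G where G: "G \<in> S" "G \<subseteq> Gs (Suc (Suc k))" using gs by (auto simp: closed_above_def)
  let ?s = "cov_seq S i (Suc k)"
  show ?case
  proof (cases "?s \<ge> Max (eqdom ` S)")
    case True
    have "eqdom G \<le> Max (eqdom ` S)" using G by simp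
    then have "eqdom G \<le> card (D Gs (Suc k) P)" using True Suc.IH by linarith
    then have "OutS G (D Gs (Suc k) P) = UNIV"
      using eqdom_prop[of G "D Gs (Suc k) P"] gr G by auto
    then have "D Gs (Suc (Suc k)) P = UNIV" using D_step[of G Gs _ P, OF G(2)] by auto
    then show ?thesis using True by simp
  next
    case False
    obtain Q where Q: "Q \<subseteq> D Gs (Suc k) P" "card Q = ?s"
      using obtain_subset_with_card_n[OF Suc.IH] by metis
    have "cov_seq S i (Suc (Suc k)) = Min ((\<lambda>G. cov ?s G) ` S)" using False by simp
    also have "\<dots> \<le> cov ?s G" using G by simp
    also have "\<dots> \<le> card (OutS G Q)" by (rule cov_le[OF Q(2)])
    also have "\<dots> \<le> card (D Gs (Suc (Suc k)) P)"
      using D_step[of G Gs _ P, OF G(2)] OutS_mono[OF Q(1), of G] by (intro card_mono) auto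
    finally show ?thesis .
  qed
qed

lemma lowset:
  fixes x :: "'p::finite \<Rightarrow> 'v::linorder"
  shows "k \<le> CARD('p) \<Longrightarrow> \<exists>P. card P = k \<and> (\<forall>p\<in>P. \<forall>q. q \<notin> P \<longrightarrow> x p \<le> x q)"
proof (induction k)
  case 0
  then show ?case by (intro exI[of _ "{}"]) simp
next
  case (Suc k)
  then obtain P where P: "card P = k" "\<forall>p\<in>P. \<forall>q. q \<notin> P \<longrightarrow> x p \<le> x q" by auto
  have "P \<noteq> UNIV" using P(1) Suc.prems by auto
  then have ne: "-P \<noteq> {}" by auto
  have "Min (x ` (-P)) \<in> x ` (-P)" using ne by (intro Min_in) auto
  then obtain q where q: "q \<notin> P" "x q = Min (x ` (-P))" by auto
  have "card (insert q P) = Suc k" using q(1) P(1) by simp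
  moreover have "\<forall>p\<in>insert q P. \<forall>r. r \<notin> insert q P \<longrightarrow> x p \<le> x r"
    using P(2) q by auto
  ultimately show ?case by blast
qed

theorem theorem10:
  fixes S :: "('p::finite) graph set" and i :: nat
  assumes "S \<noteq> {}" and "\<forall>G\<in>S. is_graph G"
    and "1 \<le> i" and "i \<le> CARD('p)"
    and "\<exists>j\<ge>1. cov_seq S i j = CARD('p)"
  shows "\<exists>(A :: ('p, ('p, 'v::linorder) view, 'v) algo) R. solves_ksa A R i (closed_above S)"
proof -
  obtain k where k: "cov_seq S i (Suc k) = CARD('p)"
  proof -
    obtain j where "j \<ge> 1" "cov_seq S i j = CARD('p)" using assms(5) by blast
    then show ?thesis using that by (cases j) auto
  qed
  have "solves_ksa (Alg :: ('p, ('p, 'v) view, 'v) algo) (Suc k) i (closed_above S)"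
    unfolding solves_ksa_def
  proof (intro ballI allI)
    fix Gs and x :: "'p \<Rightarrow> 'v"
    assume gs: "Gs \<in> closed_above S"
    obtain P where P: "card P = i" "\<forall>p\<in>P. \<forall>q. q \<notin> P \<longrightarrow> x p \<le> x q"
      using lowset[OF assms(4), of x] by auto
    have "CARD('p) \<le> card (D Gs (Suc k) P)"
      using cover[OF assms(1,2) gs P(1), of k] k by simp
    then have "card (D Gs (Suc k) P) = CARD('p)"
      using card_mono[of UNIV "D Gs (Suc k) P"] by simp
    then have DU: "D Gs (Suc k) P = UNIV" by (simp add: card_eq_UNIV_imp_eq_UNIV)
    have dec: "decide Alg p (run Alg x Gs (Suc k) p) \<in> x ` P" for p
    proof -
      let ?K = "K Gs (Suc k) p"
      have d: "decide Alg p (run Alg x Gs (Suc k) p) = Min (x ` ?K)"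
      proof -
        have "decide (Alg :: ('p, ('p, 'v) view, 'v) algo) p s = Min (vals s)" for s
          by (simp add: Alg_def)
        then show ?thesis by (simp only: vals_run)
      qed
      have "Min (x ` ?K) \<in> x ` ?K" using self_K[of p Gs "Suc k"] by (intro Min_in) auto
      then obtain r where r: "r \<in> ?K" "Min (x ` ?K) = x r" by auto
      obtain q where q: "q \<in> ?K" "q \<in> P" using DU unfolding D_def by blast
      have "x r \<le> x q" 
      proof -
        have "Min (x ` ?K) \<le> x q" using q(1) by (intro Min_le) auto
        then show ?thesis using r(2) by simp
      qed
      show ?thesis
      proof (cases "r \<in> P")
        case True then show ?thesis using d r(2) by (metis imageI)
      next
        case False
        then have "x q \<le> x r" using P(2) q(2) by blast
        then have "x r = x q" using \<open>x r \<le> x q\<close> by (rule antisym[rotated])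
        then show ?thesis using d r(2) q(2) by (metis imageI)
      qed
    qed
    have c1: "\<forall>p. decide Alg p (run Alg x Gs (Suc k) p) \<in> range x" using dec by blast
    have "range (\<lambda>p. decide Alg p (run Alg x Gs (Suc k) p)) \<subseteq> x ` P" using dec by blast
    then have "card (range (\<lambda>p. decide Alg p (run Alg x Gs (Suc k) p))) \<le> card (x ` P)"
      by (intro card_mono) auto
    also have "\<dots> \<le> card P" by (rule card_image_le) simp
    finally have "card (range (\<lambda>p. decide Alg p (run Alg x Gs (Suc k) p))) \<le> i" using P(1) by simp
    with c1 show "(\<forall>p. decide Alg p (run Alg x Gs (Suc k) p) \<in> range x) \<and>
        card (range (\<lambda>p. decide Alg p (run Alg x Gs (Suc k) p))) \<le> i" by blast
  qed
  then show ?thesis by blast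
qed

end
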